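(* Let $z\in\mathbb C^d_\Delta$. The orbit $Az$ is closed in $\mathbb C^d_\Delta$ if and only if there exists a face $F$ of $\Delta$ such that $z\in(\mathbb C^* )^{F^c}$. Moreover, if $Az$ is not closed, then its closure in $\mathbb C^d_\Delta$ contains one and only one closed $A$-orbit.
   Context: Let $\mathfrak d$ be an $n$-dimensional real vector space, $\mathfrak d^*$ its dual. A quasilattice in $\mathfrak d$ is the $\mathbb Z$-submodule generated by a finite set of vectors spanning $\mathfrak d$. Let $\Delta\subset\mathfrak d^*$ be an $n$-dimensional convex polytope (not necessarily rational or simple) with $d$ facets, written as $\Delta=\bigcap_{j=1}^d\{\mu\in\mathfrak d^*:\langle\mu,X_j\rangle\ge\lambda_j\}$, where $X_1,\dots,X_d\in\mathfrak d$ are chosen inward-pointing normals to the facets and $\lambda_j\in\mathbb R$; let $Q$ be a quasilattice containing $X_1,\dots,X_d$. For each (relatively open) face $F$ of $\Delta$ let $I_F\subseteq\{1,\dots,d\}$ be such that $F=\{\mu\in\Delta:\langle\mu,X_j\rangle=\lambda_j\iff j\in I_F\}$ (the interior of $\Delta$ is the face with $I_F=\emptyset$). For $J\subseteq\{1,\dots,d\}$ and $\mathbb K\in\{\mathbb C,\mathbb C^*\}$ put $\mathbb K^J=\{z\in\mathbb C^d: z_j\in\mathbb K\ (j\in J),\ z_j=0\ (j\notin J)\}$; write $\mathbb K^F=\mathbb K^{I_F}$, $\mathbb K^{F^c}=\mathbb K^{\{1,\dots,d\}\setminus I_F}$, and $\mathbb C^F\times(\mathbb C^* )^{F^c}=\{z\in\mathbb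 C^d: z_j\ne0\text{ for all }j\notin I_F\}$. Let $\mathbb C^d_\Delta=\bigcup_F\mathbb C^F\times(\mathbb C^* )^{F^c}$, the union over all faces of $\Delta$ (an open subset of $\mathbb C^d$). Let $\pi:\mathbb R^d\to\mathfrak d$ be the linear map with $e_j\mapsto X_j$ and $\mathfrak n=\ker\pi$. Let $A=\{\exp(iY):Y\in\mathfrak n\}$, acting on $\mathbb C^d$ by $\exp(iY)\cdot z=(e^{-2\pi Y_1}z_1,\dots,e^{-2\pi Y_d}z_d)$. *)

theory Defs
  imports "HOL-Analysis.Analysis"
begin

text \<open>The space \<open>\<dd>\<close> is \<open>real ^ 'n\<close>; its dual is identified with \<open>real ^ 'n\<close> via the
  inner product, so \<open>\<langle>\<mu>,X\<rangle> = \<mu> \<bullet> X\<close>. Facets are indexed by the finite type \<open>'d\<close>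
  (so \<open>d = CARD('d)\<close>), and \<open>\<complex>^d\<close> is \<open>complex ^ 'd\<close>.\<close>

definition Delta :: "('d::finite \<Rightarrow> real ^ 'n::finite) \<Rightarrow> ('d \<Rightarrow> real) \<Rightarrow> (real ^ 'n) set" where
  "Delta X lam = {\<mu>. \<forall>j. \<mu> \<bullet> X j \<ge> lam j}"

definition polytope_presentation :: "('d::finite \<Rightarrow> real ^ 'n::finite) \<Rightarrow> ('d \<Rightarrow> real) \<Rightarrow> bool" where
  "polytope_presentation X lam \<longleftrightarrow>
     polytope (Delta X lam) \<and> aff_dim (Delta X lam) = int CARD('n) \<and>
     (\<forall>j. {\<mu> \<in> Delta X lam. \<mu> \<bullet> X j = lam j} facet_of Delta X lam) \<and>
     inj (\<lambda>j. {\<mu> \<in> Delta X lam. \<mu> \<bullet> X j = lam j}) \<and>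
     (\<forall>F. F facet_of Delta X lam \<longrightarrow> (\<exists>j. F = {\<mu> \<in> Delta X lam. \<mu> \<bullet> X j = lam j}))"

definition open_face :: "('d::finite \<Rightarrow> real ^ 'n::finite) \<Rightarrow> ('d \<Rightarrow> real) \<Rightarrow> 'd set \<Rightarrow> (real ^ 'n) set" where
  "open_face X lam I = {\<mu> \<in> Delta X lam. \<forall>j. \<mu> \<bullet> X j = lam j \<longleftrightarrow> j \<in> I}"

text \<open>\<open>I\<close> is the index set \<open>I_F\<close> of some face \<open>F\<close> of \<open>\<Delta>\<close>.\<close>
definition is_face_index :: "('d::finite \<Rightarrow> real ^ 'n::finite) \<Rightarrow> ('d \<Rightarrow> real) \<Rightarrow> 'd set \<Rightarrow> bool" where
  "is_face_index X lam I \<longleftrightarrow> open_face X lam I \<noteq> {}"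

definition CF_times_Cstar :: "'d::finite set \<Rightarrow> (complex ^ 'd) set" where
  "CF_times_Cstar I = {z. \<forall>j. j \<notin> I \<longrightarrow> z $ j \<noteq> 0}"

definition Cstar_compl :: "'d::finite set \<Rightarrow> (complex ^ 'd) set" where
  "Cstar_compl I = {z. (\<forall>j. j \<notin> I \<longrightarrow> z $ j \<noteq> 0) \<and> (\<forall>j. j \<in> I \<longrightarrow> z $ j = 0)}"

definition CdDelta :: "('d::finite \<Rightarrow> real ^ 'n::finite) \<Rightarrow> ('d \<Rightarrow> real) \<Rightarrow> (complex ^ 'd) set" where
  "CdDelta X lam = (\<Union>I \<in> {I. is_face_index X lam I}. CF_times_Cstar I)"

text \<open>\<open>\<nn> = ker \<pi>\<close>, \<open>\<pi>(e_j) = X_j\<close>.\<close>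
definition nfrak :: "('d::finite \<Rightarrow> real ^ 'n::finite) \<Rightarrow> (real ^ 'd) set" where
  "nfrak X = {Y. (\<Sum>j\<in>UNIV. Y $ j *\<^sub>R X j) = 0}"

text \<open>Action of \<open>exp(iY)\<close> on \<open>\<complex>^d\<close>.\<close>
definition act :: "real ^ 'd::finite \<Rightarrow> complex ^ 'd \<Rightarrow> complex ^ 'd" where
  "act Y z = (\<chi> j. complex_of_real (exp (- 2 * pi * Y $ j)) * z $ j)"

definition orbit :: "('d::finite \<Rightarrow> real ^ 'n::finite) \<Rightarrow> complex ^ 'd \<Rightarrow> (complex ^ 'd) set" where
  "orbit X z = (\<lambda>Y. act Y z) ` nfrak X"

end

theory Submission
  imports Defs
begin


lemma act_nth: "act Y z $ j = complex_of_real (exp (- 2 * pi * Y $ j)) * z $ j"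
  by (simp add: act_def)

lemma act_zero_iff: "act Y z $ j = 0 \<longleftrightarrow> z $ j = 0"
  by (simp add: act_def)

lemma act_add: "act Y1 (act Y2 z) = act (Y1 + Y2) z"
proof -
  have "\<And>a b::real. exp (- 2 * pi * (a + b)) = exp (- 2 * pi * a) * exp (- 2 * pi * b)"
    by (simp add: exp_add[symmetric] algebra_simps)
  then show ?thesis by (simp add: act_def vec_eq_iff)
qed

lemma act_0: "act 0 z = z"
  by (simp add: act_def vec_eq_iff)

lemma linear_pi: "linear (\<lambda>Y::real^'d::finite. (\<Sum>j\<in>UNIV. Y $ j *\<^sub>R (X j :: real^'n::finite)))"
  by (rule linearI) (auto simp: sum.distrib scaleR_add_left scaleR_right.sum)

lemma subspace_nfrak: "subspace (nfrak X)"
proof -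
  have "nfrak X = {Y. (\<lambda>Y. (\<Sum>j\<in>UNIV. Y $ j *\<^sub>R X j)) Y = 0}" by (simp add: nfrak_def)
  then show ?thesis using linear_subspace_kernel[OF linear_pi] by simp
qed

lemma nfrak_0: "0 \<in> nfrak X" using subspace_nfrak subspace_0 by blast
lemma nfrak_add: "Y \<in> nfrak X \<Longrightarrow> Z \<in> nfrak X \<Longrightarrow> Y + Z \<in> nfrak X"
  using subspace_nfrak subspace_add by blast
lemma nfrak_scale: "Y \<in> nfrak X \<Longrightarrow> c *\<^sub>R Y \<in> nfrak X"
  using subspace_nfrak subspace_scale by blast
lemma nfrak_neg: "Y \<in> nfrak X \<Longrightarrow> - Y \<in> nfrak X"
  using subspace_nfrak subspace_neg by blast

lemma orbit_refl: "z \<in> orbit X z"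
  unfolding orbit_def using nfrak_0 act_0 by (metis image_eqI)

lemma orbit_trans: assumes "w \<in> orbit X z" shows "orbit X w = orbit X z"
proof -
  obtain Y where Y: "Y \<in> nfrak X" "w = act Y z" using assms by (auto simp: orbit_def)
  show ?thesis
  proof
    show "orbit X w \<subseteq> orbit X z"
      using Y by (auto simp: orbit_def act_add intro!: image_eqI nfrak_add)
    show "orbit X z \<subseteq> orbit X w"
    proof
      fix u assume "u \<in> orbit X z"
      then obtain Z where Z: "Z \<in> nfrak X" "u = act Z z" by (auto simp: orbit_def)
      have "u = act (Z + - Y) w" using Y Z by (simp add: act_add)
      moreover have "Z + - Y \<in> nfrak X" using Y Z by (intro nfrak_add nfrak_neg)
      ultimately show "u \<in> orbit X w" unfolding orbit_def by blast
    qed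
  qed
qed

lemma orbit_zero_iff: "w \<in> orbit X z \<Longrightarrow> w $ j = 0 \<longleftrightarrow> z $ j = 0"
  by (auto simp: orbit_def act_zero_iff)

lemma nfrak_identity:
  assumes "Y \<in> nfrak X"
  shows "(\<Sum>j\<in>UNIV. Y $ j * (\<mu> \<bullet> X j - lam j)) = - (\<Sum>j\<in>UNIV. Y $ j * lam j)"
proof -
  have "(\<Sum>j\<in>UNIV. Y $ j * (\<mu> \<bullet> X j)) = \<mu> \<bullet> (\<Sum>j\<in>UNIV. Y $ j *\<^sub>R X j)"
    by (simp add: inner_sum_right)
  also have "\<dots> = 0" using assms by (simp add: nfrak_def)
  finally show ?thesis by (simp add: right_diff_distrib sum_subtractf)
qed



lemma exp_lt_imp: "exp (a::real) < b \<Longrightarrow> a < ln b"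
  by (metis exp_gt_zero less_trans ln_exp ln_less_cancel_iff)
lemma exp_gt_imp: "0 < b \<Longrightarrow> b < exp (a::real) \<Longrightarrow> ln b < a"
  by (metis exp_gt_zero ln_exp ln_less_cancel_iff)

lemma seq_ratio:
  assumes lim: "(\<lambda>k. act (Y k) z) \<longlonglongrightarrow> w" and nz: "z $ j \<noteq> 0"
  shows "(\<lambda>k. exp (- 2 * pi * Y k $ j)) \<longlonglongrightarrow> cmod (w $ j) / cmod (z $ j)"
    and "w $ j = complex_of_real (cmod (w $ j) / cmod (z $ j)) * z $ j"
proof -
  have l1: "(\<lambda>k. act (Y k) z $ j) \<longlonglongrightarrow> w $ j" using lim by (rule tendsto_vec_nth)
  then have "(\<lambda>k. cmod (act (Y k) z $ j) / cmod (z $ j)) \<longlonglongrightarrow> cmod (w $ j) / cmod (z $ j)"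
    by (intro tendsto_divide tendsto_norm tendsto_const) (use nz in auto)
  moreover have "\<And>k. cmod (act (Y k) z $ j) / cmod (z $ j) = exp (- 2 * pi * Y k $ j)"
    using nz by (simp add: act_nth norm_mult)
  ultimately show r: "(\<lambda>k. exp (- 2 * pi * Y k $ j)) \<longlonglongrightarrow> cmod (w $ j) / cmod (z $ j)" by simp
  have "(\<lambda>k. complex_of_real (exp (- 2 * pi * Y k $ j)) * z $ j) \<longlonglongrightarrow> complex_of_real (cmod (w $ j) / cmod (z $ j)) * z $ j"
    by (intro tendsto_intros r)
  then have "(\<lambda>k. act (Y k) z $ j) \<longlonglongrightarrow> complex_of_real (cmod (w $ j) / cmod (z $ j)) * z $ j"
    by (simp add: act_nth)
  then show "w $ j = complex_of_real (cmod (w $ j) / cmod (z $ j)) * z $ j"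
    using l1 LIMSEQ_unique by blast
qed

lemma seq_zero:
  assumes lim: "(\<lambda>k. act (Y k) z) \<longlonglongrightarrow> w" and z: "z $ j = 0"
  shows "w $ j = 0"
proof -
  have l1: "(\<lambda>k. act (Y k) z $ j) \<longlonglongrightarrow> w $ j" using lim by (rule tendsto_vec_nth)
  moreover have "(\<lambda>k. act (Y k) z $ j) = (\<lambda>k. 0)" using z by (simp add: act_nth)
  ultimately show ?thesis using LIMSEQ_unique tendsto_const by metis
qed

lemma seq_lower:
  assumes lim: "(\<lambda>k. act (Y k) z) \<longlonglongrightarrow> w" and nz: "z $ j \<noteq> 0"
  shows "\<exists>B. eventually (\<lambda>k. B \<le> Y k $ j) sequentially"
proof -
  define c where "c = cmod (w $ j) / cmod (z $ j)"
  have "eventually (\<lambda>k. exp (- 2 * pi * Y k $ j) < c + 1) sequentially"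
    using order_tendstoD(2)[OF seq_ratio(1)[OF lim nz], of "c + 1"] unfolding c_def by simp
  then have "eventually (\<lambda>k. - ln (c + 1) / (2 * pi) \<le> Y k $ j) sequentially"
  proof (rule eventually_mono)
    fix k assume "exp (- 2 * pi * Y k $ j) < c + 1"
    then have "- 2 * pi * Y k $ j < ln (c + 1)" by (rule exp_lt_imp)
    then show "- ln (c + 1) / (2 * pi) \<le> Y k $ j" using pi_gt_zero
      by (simp add: field_simps)
  qed
  then show ?thesis by blast
qed

lemma seq_upper:
  assumes lim: "(\<lambda>k. act (Y k) z) \<longlonglongrightarrow> w" and nz: "z $ j \<noteq> 0" and nw: "w $ j \<noteq> 0"
  shows "\<exists>U. eventually (\<lambda>k. Y k $ j \<le> U) sequentially"
proof -
  define c where "c = cmod (w $ j) / cmod (z $ j)"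
  have cpos: "c > 0" using nz nw by (simp add: c_def)
  have "eventually (\<lambda>k. c / 2 < exp (- 2 * pi * Y k $ j)) sequentially"
    using order_tendstoD(1)[OF seq_ratio(1)[OF lim nz], of "c / 2"] cpos unfolding c_def by simp
  then have "eventually (\<lambda>k. Y k $ j \<le> - ln (c / 2) / (2 * pi)) sequentially"
  proof (rule eventually_mono)
    fix k assume "c / 2 < exp (- 2 * pi * Y k $ j)"
    then have "ln (c / 2) < - 2 * pi * Y k $ j" using cpos by (intro exp_gt_imp) auto
    then show "Y k $ j \<le> - ln (c / 2) / (2 * pi)" using pi_gt_zero
      by (simp add: field_simps)
  qed
  then show ?thesis by blast
qed

lemma seq_div:
  assumes lim: "(\<lambda>k. act (Y k) z) \<longlonglongrightarrow> w" and nz: "z $ j \<noteq> 0" and w: "w $ j = 0"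
  shows "eventually (\<lambda>k. M \<le> Y k $ j) sequentially"
proof -
  have "eventually (\<lambda>k. exp (- 2 * pi * Y k $ j) < exp (- 2 * pi * M)) sequentially"
    using order_tendstoD(2)[OF seq_ratio(1)[OF lim nz], of "exp (- 2 * pi * M)"] w by simp
  then show ?thesis
  proof (rule eventually_mono)
    fix k assume "exp (- 2 * pi * Y k $ j) < exp (- 2 * pi * M)"
    then have "- 2 * pi * Y k $ j < - 2 * pi * M" by simp
    then show "M \<le> Y k $ j" using pi_gt_zero by (simp add: field_simps)
  qed
qed

lemma seq_conv:
  assumes lim: "(\<lambda>k. act (Y k) z) \<longlonglongrightarrow> w" and nz: "z $ j \<noteq> 0" and nw: "w $ j \<noteq> 0"
  shows "(\<lambda>k. Y k $ j) \<longlonglongrightarrow> - ln (cmod (w $ j) / cmod (z $ j)) / (2 * pi)"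
proof -
  define c where "c = cmod (w $ j) / cmod (z $ j)"
  have cpos: "c > 0" using nz nw by (simp add: c_def)
  have "(\<lambda>k. - ln (exp (- 2 * pi * Y k $ j)) / (2 * pi)) \<longlonglongrightarrow> - ln c / (2 * pi)"
    using seq_ratio(1)[OF lim nz] cpos unfolding c_def by (intro tendsto_intros) auto
  then show ?thesis unfolding c_def by simp
qed



lemma limit_in_orbit:
  assumes Y: "\<And>k. Y k \<in> nfrak X" and lim: "(\<lambda>k. act (Y k) z) \<longlonglongrightarrow> w"
    and nz: "\<And>j. z $ j \<noteq> 0 \<Longrightarrow> w $ j \<noteq> 0"
  shows "w \<in> orbit X z"
proof -
  define P where "P = (\<lambda>V::real^'a. (\<chi> j. if z $ j \<noteq> 0 then V $ j else 0))"
  have linP: "linear P" unfolding P_def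
    by (rule linearI) (auto simp: vec_eq_iff)
  define a where "a = (\<chi> j. if z $ j \<noteq> 0 then - ln (cmod (w $ j) / cmod (z $ j)) / (2 * pi) else 0)"
  have "(\<lambda>k. P (Y k)) \<longlonglongrightarrow> a"
  proof (rule vec_tendstoI)
    fix j
    show "(\<lambda>k. P (Y k) $ j) \<longlonglongrightarrow> a $ j"
    proof (cases "z $ j = 0")
      case True then show ?thesis by (simp add: P_def a_def)
    next
      case False then show ?thesis
        using seq_conv[OF lim False nz[OF False]] by (simp add: P_def a_def)
    qed
  qed
  moreover have cl: "closed (P ` nfrak X)"
    by (intro closed_subspace linear_subspace_image[OF linP] subspace_nfrak)
  ultimately have "a \<in> P ` nfrak X"
    using Y closed_sequential_limits[THEN iffD1, OF cl, rule_format, of "\<lambda>k. P (Y k)" a] by blast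
  then obtain Y' where Y': "Y' \<in> nfrak X" "a = P Y'" by auto
  have "w = act Y' z"
  proof (subst vec_eq_iff, intro allI)
    fix j
    show "w $ j = act Y' z $ j"
    proof (cases "z $ j = 0")
      case True then show ?thesis using seq_zero[OF lim True] by (simp add: act_nth)
    next
      case False
      define c where "c = cmod (w $ j) / cmod (z $ j)"
      have cpos: "c > 0" using False nz[OF False] by (simp add: c_def)
      have "Y' $ j = - ln c / (2 * pi)"
      proof -
        have "a $ j = P Y' $ j" using Y'(2) by simp
        then show ?thesis using False by (simp add: P_def a_def c_def)
      qed
      then have "exp (- 2 * pi * Y' $ j) = c" using cpos by simp
      then show ?thesis using seq_ratio(2)[OF lim False] by (simp add: act_nth c_def)
    qed
  qed
  then show ?thesis using Y'(1) by (auto simp: orbit_def)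
qed



lemma key:
  fixes X :: "'d::finite \<Rightarrow> real ^ 'n::finite"
  assumes Y: "\<And>k. Y k \<in> nfrak X" and lim: "(\<lambda>k. act (Y k) z) \<longlonglongrightarrow> w"
    and mu: "\<mu> \<in> Delta X lam" and nu: "\<nu> \<in> Delta X lam"
    and hz: "\<And>j. \<mu> \<bullet> X j \<noteq> lam j \<Longrightarrow> z $ j \<noteq> 0"
    and hw: "\<And>j. \<nu> \<bullet> X j \<noteq> lam j \<Longrightarrow> w $ j \<noteq> 0"
    and j0: "\<mu> \<bullet> X j0 \<noteq> lam j0"
  shows "w $ j0 \<noteq> 0"
proof
  assume w0: "w $ j0 = 0"
  define m where "m j = \<mu> \<bullet> X j - lam j" for j
  define p where "p j = \<nu> \<bullet> X j - lam j" for j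
  have m0: "m j \<ge> 0" for j using mu by (simp add: m_def Delta_def)
  have p0: "p j \<ge> 0" for j using nu by (simp add: p_def Delta_def)
  have eq: "(\<Sum>j\<in>UNIV. Y k $ j * m j) = (\<Sum>j\<in>UNIV. Y k $ j * p j)" for k
    using nfrak_identity[OF Y[of k], of \<mu> lam] nfrak_identity[OF Y[of k], of \<nu> lam]
    by (simp add: m_def p_def)
  have "\<forall>j. \<exists>U. eventually (\<lambda>k. Y k $ j * p j \<le> U) sequentially"
  proof
    fix j show "\<exists>U. eventually (\<lambda>k. Y k $ j * p j \<le> U) sequentially"
    proof (cases "p j = 0")
      case True then show ?thesis by auto
    next
      case False
      then have pp: "p j > 0" using p0[of j] by simp
      have wj: "w $ j \<noteq> 0" using hw False by (simp add: p_def)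
      have zj: "z $ j \<noteq> 0" using seq_zero[OF lim] wj by blast
      obtain U where "eventually (\<lambda>k. Y k $ j \<le> U) sequentially"
        using seq_upper[OF lim zj wj] by blast
      then have "eventually (\<lambda>k. Y k $ j * p j \<le> U * p j) sequentially"
        by (rule eventually_mono) (use pp in \<open>simp add: mult_right_mono\<close>)
      then show ?thesis by blast
    qed
  qed
  then obtain U where U: "\<And>j. eventually (\<lambda>k. Y k $ j * p j \<le> U j) sequentially"
    by (subst (asm) choice_iff) blast
  have "\<forall>j. \<exists>B. eventually (\<lambda>k. B \<le> Y k $ j * m j) sequentially"
  proof
    fix j show "\<exists>B. eventually (\<lambda>k. B \<le> Y k $ j * m j) sequentially"
    proof (cases "m j = 0")
      case True then show ?thesis by auto
    next
      case False
      then have mp: "m j > 0" using m0[of j] by simp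
      have zj: "z $ j \<noteq> 0" using hz False by (simp add: m_def)
      obtain B where "eventually (\<lambda>k. B \<le> Y k $ j) sequentially"
        using seq_lower[OF lim zj] by blast
      then have "eventually (\<lambda>k. B * m j \<le> Y k $ j * m j) sequentially"
        by (rule eventually_mono) (use mp in \<open>simp add: mult_right_mono\<close>)
      then show ?thesis by blast
    qed
  qed
  then obtain B where B: "\<And>j. eventually (\<lambda>k. B j \<le> Y k $ j * m j) sequentially"
    by (subst (asm) choice_iff) blast
  have mj0: "m j0 > 0" using j0 m0[of j0] by (simp add: m_def)
  have zj0: "z $ j0 \<noteq> 0" using hz j0 by simp
  define M where "M = ((\<Sum>j\<in>UNIV. U j) - (\<Sum>j\<in>UNIV - {j0}. B j) + 1) / m j0"
  have D: "eventually (\<lambda>k. M \<le> Y k $ j0) sequentially"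
    by (rule seq_div[OF lim zj0 w0])
  have ev: "eventually (\<lambda>k. (\<forall>j. Y k $ j * p j \<le> U j) \<and> (\<forall>j. B j \<le> Y k $ j * m j) \<and> M \<le> Y k $ j0) sequentially"
  proof -
    have e1: "eventually (\<lambda>k. \<forall>j. Y k $ j * p j \<le> U j) sequentially"
      by (rule eventually_all_finite) (rule U)
    have e2: "eventually (\<lambda>k. \<forall>j. B j \<le> Y k $ j * m j) sequentially"
      by (rule eventually_all_finite) (rule B)
    show ?thesis using eventually_conj[OF e1 eventually_conj[OF e2 D]] .
  qed
  then obtain k where k: "\<forall>j. Y k $ j * p j \<le> U j" "\<forall>j. B j \<le> Y k $ j * m j" "M \<le> Y k $ j0"
  proof -
    obtain N where "\<forall>n\<ge>N. (\<forall>j. Y n $ j * p j \<le> U j) \<and> (\<forall>j. B j \<le> Y n $ j * m j) \<and> M \<le> Y n $ j0"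
      using ev unfolding eventually_sequentially by blast
    then show ?thesis using that by blast
  qed
  have s1: "(\<Sum>j\<in>UNIV. Y k $ j * p j) \<le> (\<Sum>j\<in>UNIV. U j)"
    using k(1) by (intro sum_mono) auto
  have s2: "(\<Sum>j\<in>UNIV - {j0}. B j) \<le> (\<Sum>j\<in>UNIV - {j0}. Y k $ j * m j)"
    using k(2) by (intro sum_mono) auto
  have s3: "M * m j0 \<le> Y k $ j0 * m j0" using k(3) mj0 by (simp add: mult_right_mono)
  have s4: "M * m j0 = (\<Sum>j\<in>UNIV. U j) - (\<Sum>j\<in>UNIV - {j0}. B j) + 1"
    using mj0 by (simp add: M_def)
  have s5: "(\<Sum>j\<in>UNIV. Y k $ j * m j) = Y k $ j0 * m j0 + (\<Sum>j\<in>UNIV - {j0}. Y k $ j * m j)"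
    by (simp add: sum.remove)
  show False using eq[of k] s1 s2 s3 s4 s5 by linarith
qed



definition tight :: "('d::finite \<Rightarrow> real ^ 'n::finite) \<Rightarrow> ('d \<Rightarrow> real) \<Rightarrow> real ^ 'n \<Rightarrow> 'd set" where
  "tight X lam \<mu> = {j. \<mu> \<bullet> X j = lam j}"

lemma L_axis: "(\<Sum>i\<in>UNIV. axis j c $ i *\<^sub>R (X i :: 'a::real_vector)) = c *\<^sub>R X j"
proof -
  have "\<And>i. axis j c $ i *\<^sub>R X i = (if i = j then c *\<^sub>R X j else 0)" by (simp add: axis_def)
  then show ?thesis by simp
qed

lemma direction:
  fixes X :: "'d::finite \<Rightarrow> real ^ 'n::finite"
  assumes mu: "\<mu> \<in> Delta X lam" and J: "J \<subseteq> tight X lam \<mu>"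
    and minimal: "\<And>\<nu>. \<nu> \<in> Delta X lam \<Longrightarrow> J \<subseteq> tight X lam \<nu> \<Longrightarrow> card (tight X lam \<mu>) \<le> card (tight X lam \<nu>)"
    and k: "k \<in> tight X lam \<mu> - J"
  shows "\<exists>Y \<in> nfrak X. (\<forall>j. j \<notin> tight X lam \<mu> \<longrightarrow> Y $ j = 0) \<and> (\<forall>j \<in> tight X lam \<mu> - J. Y $ j \<ge> 0) \<and> Y $ k > 0"
proof -
  define I where "I = tight X lam \<mu>"
  define L where "L = (\<lambda>Y::real^'d. (\<Sum>j\<in>UNIV. Y $ j *\<^sub>R X j))"
  have linL: "linear L" unfolding L_def by (rule linear_pi)
  define K where "K = {Y::real^'d. (\<forall>j. j \<notin> I \<longrightarrow> Y $ j = 0) \<and> (\<forall>j \<in> I - J. Y $ j \<ge> 0)}"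
  define S where "S = X ` (I - J) \<union> X ` J \<union> (\<lambda>j. - X j) ` J"
  define C where "C = convex_cone hull S"
  have finS: "finite S" unfolding S_def by auto
  have clC: "closed C" unfolding C_def
    by (rule polyhedron_imp_closed, rule polyhedron_convex_cone_hull[OF finS])
  have cvC: "convex C" unfolding C_def by (rule convex_convex_cone_hull)
  have JI: "J \<subseteq> I" using J by (simp add: I_def)
  have ccK: "convex_cone K" unfolding convex_cone_iff K_def by auto
  have ccLK: "convex_cone (L ` K)" using convex_cone_linear_image ccK linL by blast
  have "S \<subseteq> L ` K"
  proof -
    have ax: "L (axis j c) = c *\<^sub>R X j" for j c unfolding L_def by (rule L_axis)
    have "X j \<in> L ` K" if "j \<in> I" for j
    proof -
      have "axis j 1 \<in> K" using that by (auto simp: K_def axis_def)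
      then show ?thesis using ax[of j 1] by (metis image_eqI scaleR_one)
    qed
    moreover have "- X j \<in> L ` K" if "j \<in> J" for j
    proof -
      have "axis j (-1) \<in> K" using that JI by (auto simp: K_def axis_def)
      then show ?thesis using ax[of j "-1"] by (metis image_eqI scaleR_minus1_left)
    qed
    ultimately show ?thesis unfolding S_def using JI by auto
  qed
  then have CLK: "C \<subseteq> L ` K" unfolding C_def using ccLK by (rule hull_minimal)
  show ?thesis
  proof (cases "- X k \<in> C")
    case True
    then obtain Y where Y: "Y \<in> K" "- X k = L Y" using CLK by auto
    define Y' where "Y' = Y + axis k 1"
    have "L Y' = 0" using Y(2)[symmetric] linear_add[OF linL] L_axis[of k 1 X] unfolding Y'_def L_def by simp
    then have "Y' \<in> nfrak X" by (simp add: nfrak_def L_def)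
    moreover have "\<forall>j. j \<notin> I \<longrightarrow> Y' $ j = 0" using Y(1) k by (auto simp: Y'_def K_def axis_def I_def)
    moreover have "\<forall>j \<in> I - J. Y' $ j \<ge> 0" using Y(1) by (auto simp: Y'_def K_def axis_def)
    moreover have "Y' $ k > 0"
    proof -
      have "Y $ k \<ge> 0" using Y(1) k by (auto simp: K_def I_def)
      then show ?thesis by (simp add: Y'_def axis_def)
    qed
    ultimately show ?thesis unfolding I_def by blast
  next
    case False
    obtain a b where ab: "a \<bullet> (- X k) < b" "\<forall>x\<in>C. b < a \<bullet> x"
      using separating_hyperplane_closed_point[OF cvC clC False] by blast
    have b0: "b < 0" using ab(2) convex_cone_hull_contains_0[of S] unfolding C_def by force
    have pos: "a \<bullet> x \<ge> 0" if "x \<in> C" for x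
    proof (rule ccontr)
      assume "\<not> 0 \<le> a \<bullet> x"
      then have neg: "a \<bullet> x < 0" by simp
      define t where "t = b / (a \<bullet> x)"
      have t0: "t \<ge> 0" using neg b0 by (simp add: t_def divide_nonpos_neg)
      have "t *\<^sub>R x \<in> C" using convex_cone_hull_mul[OF _ t0] that unfolding C_def by blast
      then have "b < a \<bullet> (t *\<^sub>R x)" using ab(2) by blast
      also have "a \<bullet> (t *\<^sub>R x) = b" using neg by (simp add: t_def)
      finally show False by simp
    qed
    have SC: "S \<subseteq> C" unfolding C_def by (rule hull_subset)
    have aIJ: "a \<bullet> X j \<ge> 0" if "j \<in> I - J" for j using pos SC that unfolding S_def by blast
    have aJ: "a \<bullet> X j = 0" if "j \<in> J" for j
    proof -
      have "a \<bullet> X j \<ge> 0" "a \<bullet> (- X j) \<ge> 0" using pos SC that unfolding S_def by blast+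
      then show ?thesis by simp
    qed
    have ak: "a \<bullet> X k > 0" using ab(1) b0 by simp
    have "\<forall>j. \<forall>\<^sub>F e in at_right (0::real). j \<notin> I \<longrightarrow> lam j < \<mu> \<bullet> X j + e * (a \<bullet> X j)"
    proof
      fix j
      show "\<forall>\<^sub>F e in at_right (0::real). j \<notin> I \<longrightarrow> lam j < \<mu> \<bullet> X j + e * (a \<bullet> X j)"
      proof (cases "j \<in> I")
        case True then show ?thesis by simp
      next
        case False
        then have "lam j < \<mu> \<bullet> X j" using mu by (auto simp: I_def tight_def Delta_def less_le)
        moreover have "((\<lambda>e. \<mu> \<bullet> X j + e * (a \<bullet> X j)) \<longlongrightarrow> \<mu> \<bullet> X j + 0 * (a \<bullet> X j)) (at_right (0::real))"
          by (intro tendsto_intros)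
        ultimately have "\<forall>\<^sub>F e in at_right (0::real). lam j < \<mu> \<bullet> X j + e * (a \<bullet> X j)"
          using order_tendstoD(1) by fastforce
        then show ?thesis by (rule eventually_mono) simp
      qed
    qed
    then have "\<forall>\<^sub>F e in at_right (0::real). \<forall>j. j \<notin> I \<longrightarrow> lam j < \<mu> \<bullet> X j + e * (a \<bullet> X j)"
      by (intro eventually_all_finite) blast
    moreover have "\<forall>\<^sub>F e in at_right (0::real). e > 0" by (simp add: eventually_at_right_less)
    ultimately have "\<forall>\<^sub>F e in at_right (0::real). e > 0 \<and> (\<forall>j. j \<notin> I \<longrightarrow> lam j < \<mu> \<bullet> X j + e * (a \<bullet> X j))"
      by (rule eventually_conj[rotated])
    then obtain e where e: "e > 0" "\<forall>j. j \<notin> I \<longrightarrow> lam j < \<mu> \<bullet> X j + e * (a \<bullet> X j)"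
      using eventually_happens[of _ "at_right (0::real)"] trivial_limit_at_right_real by blast
    define \<nu> where "\<nu> = \<mu> + e *\<^sub>R a"
    have nuX: "\<nu> \<bullet> X j = \<mu> \<bullet> X j + e * (a \<bullet> X j)" for j by (simp add: \<nu>_def inner_add_left)
    have muI: "\<mu> \<bullet> X j = lam j" if "j \<in> I" for j using that by (simp add: I_def tight_def)
    have nuD: "\<nu> \<in> Delta X lam"
    proof -
      have "lam j \<le> \<nu> \<bullet> X j" for j
      proof (cases "j \<in> I")
        case True
        then have "a \<bullet> X j \<ge> 0" using aIJ aJ by (cases "j \<in> J") auto
        then show ?thesis using True muI e(1) nuX by simp
      next
        case False then show ?thesis using e(2) nuX by (simp add: less_imp_le)
      qed
      then show ?thesis by (simp add: Delta_def)
    qed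
    have "J \<subseteq> tight X lam \<nu>" using aJ JI muI nuX by (auto simp: tight_def)
    then have c1: "card I \<le> card (tight X lam \<nu>)" using minimal[OF nuD] by (simp add: I_def)
    have "tight X lam \<nu> \<subseteq> I - {k}"
    proof
      fix j assume "j \<in> tight X lam \<nu>"
      then have jt: "\<nu> \<bullet> X j = lam j" by (simp add: tight_def)
      have "j \<in> I" using e(2) jt nuX by (metis less_irrefl)
      moreover have "j \<noteq> k" using jt nuX[of k] muI[of k] k ak e(1) by (auto simp: I_def)
      ultimately show "j \<in> I - {k}" by simp
    qed
    then have "card (tight X lam \<nu>) \<le> card (I - {k})" by (intro card_mono) auto
    also have "\<dots> < card I" by (rule card_Diff1_less) (use k in \<open>auto simp: I_def\<close>)
    finally show ?thesis using c1 by simp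
  qed
qed



lemma face_index_iff: "is_face_index X lam I \<longleftrightarrow> (\<exists>\<mu>\<in>Delta X lam. tight X lam \<mu> = I)"
  by (auto simp: is_face_index_def open_face_def tight_def)

lemma CdDelta_iff: "z \<in> CdDelta X lam \<longleftrightarrow> (\<exists>\<mu>\<in>Delta X lam. \<forall>j. \<mu> \<bullet> X j \<noteq> lam j \<longrightarrow> z $ j \<noteq> 0)"
  by (auto simp: CdDelta_def face_index_iff CF_times_Cstar_def tight_def)

lemma Cstar_iff: "z \<in> Cstar_compl I \<longleftrightarrow> {j. z $ j = 0} = I"
  by (auto simp: Cstar_compl_def)

lemma closedin_iff2: "closedin (top_of_set U) S \<longleftrightarrow> S \<subseteq> U \<and> U \<inter> closure S \<subseteq> S"
proof
  assume "closedin (top_of_set U) S"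
  then obtain T where T: "closed T" "S = U \<inter> T" by (auto simp: closedin_closed)
  then have "closure S \<subseteq> T" by (simp add: closure_minimal)
  then show "S \<subseteq> U \<and> U \<inter> closure S \<subseteq> S" using T by auto
next
  assume "S \<subseteq> U \<and> U \<inter> closure S \<subseteq> S"
  then have "S = U \<inter> closure S" using closure_subset by blast
  then show "closedin (top_of_set U) S" unfolding closedin_closed
    by (intro exI[of _ "closure S"]) simp
qed

lemma seq_of_closure:
  assumes "w \<in> closure (orbit X z)"
  shows "\<exists>Y. (\<forall>k. Y k \<in> nfrak X) \<and> (\<lambda>k. act (Y k) z) \<longlonglongrightarrow> w"
proof -
  obtain x where x: "\<forall>n. x n \<in> orbit X z" "x \<longlonglongrightarrow> w" using assms closure_sequential by metis
  have "\<forall>n. \<exists>Y. Y \<in> nfrak X \<and> x n = act Y z" using x(1) by (auto simp: orbit_def)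
  then obtain Y where "\<forall>n. Y n \<in> nfrak X \<and> x n = act (Y n) z" by metis
  note this
  moreover have "(\<lambda>k. act (Y k) z) = x" using \<open>\<forall>n. Y n \<in> nfrak X \<and> x n = act (Y n) z\<close> by auto
  ultimately show ?thesis using x(2) by auto
qed

lemma orbit_in_CdDelta: "z \<in> CdDelta X lam \<Longrightarrow> orbit X z \<subseteq> CdDelta X lam"
proof
  fix u assume z: "z \<in> CdDelta X lam" and u: "u \<in> orbit X z"
  obtain \<mu> where "\<mu> \<in> Delta X lam" "\<forall>j. \<mu> \<bullet> X j \<noteq> lam j \<longrightarrow> z $ j \<noteq> 0" using z CdDelta_iff by blast
  moreover have "\<forall>j. z $ j \<noteq> 0 \<longrightarrow> u $ j \<noteq> 0" using orbit_zero_iff[OF u] by blast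
  ultimately show "u \<in> CdDelta X lam" unfolding CdDelta_iff by blast
qed

lemma CLOSED:
  fixes X :: "'d::finite \<Rightarrow> real ^ 'n::finite"
  assumes fi: "is_face_index X lam {j. z $ j = 0}"
  shows "closedin (top_of_set (CdDelta X lam)) (orbit X z)"
proof -
  obtain \<mu> where mu: "\<mu> \<in> Delta X lam" "tight X lam \<mu> = {j. z $ j = 0}" using fi face_index_iff by metis
  have zC: "z \<in> CdDelta X lam" using mu unfolding CdDelta_iff by (auto simp: tight_def)
  have "CdDelta X lam \<inter> closure (orbit X z) \<subseteq> orbit X z"
  proof
    fix w assume w: "w \<in> CdDelta X lam \<inter> closure (orbit X z)"
    obtain Y where Y: "\<forall>k. Y k \<in> nfrak X" "(\<lambda>k. act (Y k) z) \<longlonglongrightarrow> w" using w seq_of_closure by blast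
    obtain \<nu> where nu: "\<nu> \<in> Delta X lam" "\<forall>j. \<nu> \<bullet> X j \<noteq> lam j \<longrightarrow> w $ j \<noteq> 0" using w CdDelta_iff by blast
    have hz: "\<And>j. \<mu> \<bullet> X j \<noteq> lam j \<Longrightarrow> z $ j \<noteq> 0" using mu(2) by (auto simp: tight_def)
    have "\<And>j. z $ j \<noteq> 0 \<Longrightarrow> w $ j \<noteq> 0"
    proof -
      fix j assume "z $ j \<noteq> 0"
      then have "\<mu> \<bullet> X j \<noteq> lam j" using mu(2) by (auto simp: tight_def)
      then show "w $ j \<noteq> 0" using key[of Y X z w \<mu> lam \<nu> j] Y mu(1) nu hz by blast
    qed
    then show "w \<in> orbit X z" using limit_in_orbit[of Y X z w] Y by blast
  qed
  then show ?thesis using orbit_in_CdDelta[OF zC] by (simp add: closedin_iff2)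
qed

lemma exists_min:
  assumes "z \<in> CdDelta X lam"
  shows "\<exists>\<mu>. \<mu> \<in> Delta X lam \<and> {j. z $ j = 0} \<subseteq> tight X lam \<mu> \<and>
     (\<forall>\<nu>. \<nu> \<in> Delta X lam \<and> {j. z $ j = 0} \<subseteq> tight X lam \<nu> \<longrightarrow> card (tight X lam \<mu>) \<le> card (tight X lam \<nu>))"
proof -
  obtain \<nu> where "\<nu> \<in> Delta X lam" "\<forall>j. \<nu> \<bullet> X j \<noteq> lam j \<longrightarrow> z $ j \<noteq> 0" using assms CdDelta_iff by blast
  then have "\<nu> \<in> Delta X lam \<and> {j. z $ j = 0} \<subseteq> tight X lam \<nu>" by (auto simp: tight_def)
  then show ?thesis
    using ex_has_least_nat[of "\<lambda>\<nu>. \<nu> \<in> Delta X lam \<and> {j. z $ j = 0} \<subseteq> tight X lam \<nu>" \<nu> "\<lambda>\<nu>. card (tight X lam \<nu>)"]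
    by blast
qed

lemma dirsum:
  fixes X :: "'d::finite \<Rightarrow> real ^ 'n::finite"
  assumes mu: "\<mu> \<in> Delta X lam" and J: "J \<subseteq> tight X lam \<mu>"
    and minimal: "\<And>\<nu>. \<nu> \<in> Delta X lam \<Longrightarrow> J \<subseteq> tight X lam \<nu> \<Longrightarrow> card (tight X lam \<mu>) \<le> card (tight X lam \<nu>)"
  shows "\<exists>Y \<in> nfrak X. (\<forall>j. j \<notin> tight X lam \<mu> \<longrightarrow> Y $ j = 0) \<and> (\<forall>j \<in> tight X lam \<mu> - J. Y $ j > 0)"
proof -
  define I where "I = tight X lam \<mu>"
  have "\<forall>k\<in>I - J. \<exists>Y. Y \<in> nfrak X \<and> (\<forall>j. j \<notin> I \<longrightarrow> Y $ j = 0) \<and> (\<forall>j \<in> I - J. Y $ j \<ge> 0) \<and> Y $ k > 0"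
    using direction[OF mu J minimal] unfolding I_def by blast
  then obtain f where f: "\<And>k. k \<in> I - J \<Longrightarrow> f k \<in> nfrak X \<and> (\<forall>j. j \<notin> I \<longrightarrow> f k $ j = 0) \<and> (\<forall>j \<in> I - J. f k $ j \<ge> 0) \<and> f k $ k > 0"
    by metis
  define Y where "Y = sum f (I - J)"
  have "Y \<in> nfrak X" unfolding Y_def using f by (intro subspace_sum[OF subspace_nfrak]) blast
  moreover have "\<forall>j. j \<notin> I \<longrightarrow> Y $ j = 0" using f by (simp add: Y_def)
  moreover have "\<forall>j \<in> I - J. Y $ j > 0"
  proof
    fix j assume j: "j \<in> I - J"
    have "Y $ j = f j $ j + (\<Sum>k\<in>I - J - {j}. f k $ j)"
      unfolding Y_def sum_component using j by (simp add: sum.remove)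
    moreover have "(\<Sum>k\<in>I - J - {j}. f k $ j) \<ge> 0" using f j by (intro sum_nonneg) blast
    moreover have "f j $ j > 0" using f j by blast
    ultimately show "Y $ j > 0" by linarith
  qed
  ultimately show ?thesis unfolding I_def by blast
qed

lemma limit_point:
  assumes Y: "Y \<in> nfrak X" "\<forall>j. j \<notin> I \<longrightarrow> Y $ j = 0" "\<forall>j \<in> I - {j. z $ j = 0}. Y $ j > 0"
  shows "(\<chi> j. if j \<in> I then 0 else z $ j) \<in> closure (orbit X z)"
proof -
  define w where "w = (\<chi> j. if j \<in> I then 0 else z $ j)"
  have "(\<lambda>k. act (real k *\<^sub>R Y) z) \<longlonglongrightarrow> w"
  proof (rule vec_tendstoI)
    fix j
    show "(\<lambda>k. act (real k *\<^sub>R Y) z $ j) \<longlonglongrightarrow> w $ j"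
    proof (cases "j \<in> I \<and> z $ j \<noteq> 0")
      case True
      then have Yp: "Y $ j > 0" using Y(3) by auto
      have e: "exp (- 2 * pi * (real k * Y $ j)) = exp (- 2 * pi * Y $ j) ^ k" for k
        using exp_of_nat_mult[of k "- 2 * pi * Y $ j"] by (simp add: algebra_simps)
      have "0 < 2 * pi * Y $ j" using Yp by simp
      then have "exp (- 2 * pi * Y $ j) < 1" by simp
      then have "norm (exp (- 2 * pi * Y $ j)) < 1" by simp
      then have "(\<lambda>k. exp (- 2 * pi * Y $ j) ^ k) \<longlonglongrightarrow> 0" by (rule LIMSEQ_power_zero)
      then have lim0: "(\<lambda>k. complex_of_real (exp (- 2 * pi * Y $ j) ^ k) * z $ j) \<longlonglongrightarrow> complex_of_real 0 * z $ j"
        by (rule tendsto_mult[OF tendsto_of_real tendsto_const])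
      have a: "act (real k *\<^sub>R Y) z $ j = complex_of_real (exp (- 2 * pi * Y $ j) ^ k) * z $ j" for k
      proof -
        have "act (real k *\<^sub>R Y) z $ j = complex_of_real (exp (- 2 * pi * ((real k *\<^sub>R Y) $ j))) * z $ j"
          by (rule act_nth)
        also have "(real k *\<^sub>R Y) $ j = real k * Y $ j" by simp
        finally show ?thesis by (simp only: e)
      qed
      have w0: "w $ j = 0" using True by (simp add: w_def)
      have fe: "(\<lambda>k. act (real k *\<^sub>R Y) z $ j) = (\<lambda>k. complex_of_real (exp (- 2 * pi * Y $ j) ^ k) * z $ j)"
        using a by blast
      show ?thesis unfolding fe w0 using lim0 by simp
    next
      case False
      then show ?thesis
      proof (cases "j \<in> I")
        case True
        then have "z $ j = 0" using False by simp
        then show ?thesis using True by (simp add: act_nth w_def)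
      next
        case False
        then show ?thesis using Y(2) by (simp add: act_nth w_def)
      qed
    qed
  qed
  moreover have "\<forall>k. act (real k *\<^sub>R Y) z \<in> orbit X z"
    using Y(1) nfrak_scale by (auto simp: orbit_def)
  ultimately have "w \<in> closure (orbit X z)"
    by (intro closure_sequential[THEN iffD2] exI[of _ "\<lambda>k. act (real k *\<^sub>R Y) z"]) simp
  then show ?thesis unfolding w_def .
qed

lemma act_cont: "continuous_on S (act Y)"
  unfolding act_def by (intro continuous_intros)

lemma orbit_closure_invariant:
  assumes "w \<in> closure (orbit X z)"
  shows "orbit X w \<subseteq> closure (orbit X z)"
proof
  fix u assume "u \<in> orbit X w"
  then obtain Y' where Y': "Y' \<in> nfrak X" "u = act Y' w" by (auto simp: orbit_def)
  have "act Y' ` orbit X z \<subseteq> closure (orbit X z)"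
  proof
    fix v assume "v \<in> act Y' ` orbit X z"
    then obtain Y where "Y \<in> nfrak X" "v = act Y' (act Y z)" by (auto simp: orbit_def)
    then have "v \<in> orbit X z" using Y' nfrak_add by (auto simp: orbit_def act_add)
    then show "v \<in> closure (orbit X z)" using closure_subset by blast
  qed
  then have "act Y' ` closure (orbit X z) \<subseteq> closure (orbit X z)"
    by (intro image_closure_subset act_cont) auto
  then show "u \<in> closure (orbit X z)" using Y' assms by blast
qed



lemma CLOSED_IMP:
  fixes X :: "'d::finite \<Rightarrow> real ^ 'n::finite"
  assumes zC: "z \<in> CdDelta X lam" and cl: "closedin (top_of_set (CdDelta X lam)) (orbit X z)"
  shows "is_face_index X lam {j. z $ j = 0}"
proof (rule ccontr)
  assume nf: "\<not> is_face_index X lam {j. z $ j = 0}"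
  define J where "J = {j. z $ j = 0}"
  have "\<exists>\<mu>. \<mu> \<in> Delta X lam \<and> J \<subseteq> tight X lam \<mu> \<and>
     (\<forall>\<nu>. \<nu> \<in> Delta X lam \<and> J \<subseteq> tight X lam \<nu> \<longrightarrow> card (tight X lam \<mu>) \<le> card (tight X lam \<nu>))"
    unfolding J_def by (rule exists_min[OF zC])
  then obtain \<mu> where mu0: "\<mu> \<in> Delta X lam \<and> J \<subseteq> tight X lam \<mu> \<and>
     (\<forall>\<nu>. \<nu> \<in> Delta X lam \<and> J \<subseteq> tight X lam \<nu> \<longrightarrow> card (tight X lam \<mu>) \<le> card (tight X lam \<nu>))"
    by blast
  then have mu: "\<mu> \<in> Delta X lam" "J \<subseteq> tight X lam \<mu>" by auto
  have minimal: "\<And>\<nu>. \<nu> \<in> Delta X lam \<Longrightarrow> J \<subseteq> tight X lam \<nu> \<Longrightarrow> card (tight X lam \<mu>) \<le> card (tight X lam \<nu>)"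
    using mu0 by blast
  define I where "I = tight X lam \<mu>"
  have "\<exists>Y \<in> nfrak X. (\<forall>j. j \<notin> I \<longrightarrow> Y $ j = 0) \<and> (\<forall>j \<in> I - J. Y $ j > 0)"
    using dirsum[OF mu minimal] unfolding I_def .
  then obtain Y where Y: "Y \<in> nfrak X" "\<forall>j. j \<notin> I \<longrightarrow> Y $ j = 0" "\<forall>j \<in> I - J. Y $ j > 0"
    by blast
  define w where "w = (\<chi> j. if j \<in> I then 0 else z $ j)"
  have wcl: "w \<in> closure (orbit X z)" unfolding w_def
    by (rule limit_point[OF Y(1) Y(2)]) (use Y(3) in \<open>simp add: J_def\<close>)
  have JI: "J \<subseteq> I" using mu by (simp add: I_def)
  have wC: "w \<in> CdDelta X lam" unfolding CdDelta_iff
  proof (intro bexI[OF _ mu(1)] allI impI)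
    fix j assume "\<mu> \<bullet> X j \<noteq> lam j"
    then have "j \<notin> I" by (simp add: I_def tight_def)
    then show "w $ j \<noteq> 0" using JI by (auto simp: w_def J_def)
  qed
  have "CdDelta X lam \<inter> closure (orbit X z) \<subseteq> orbit X z" using closedin_iff2[THEN iffD1, OF cl] by (rule conjunct2)
  then have wo: "w \<in> orbit X z" using wC wcl by blast
  have "I \<subseteq> J"
  proof
    fix j assume j: "j \<in> I"
    then have "w $ j = 0" by (simp add: w_def)
    then have "z $ j = 0" using orbit_zero_iff[OF wo] by blast
    then show "j \<in> J" by (simp add: J_def)
  qed
  then have "I = J" using JI by blast
  then have "is_face_index X lam J" using mu(1) by (auto simp: face_index_iff I_def)
  then show False using nf by (simp add: J_def)
qed



theorem mainTheorem3:
  fixes X :: "'d::finite \<Rightarrow> real ^ 'n::finite" and lam :: "'d \<Rightarrow> real"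
    and z :: "complex ^ 'd"
  assumes "polytope_presentation X lam"
    and "z \<in> CdDelta X lam"
  shows "(closedin (top_of_set (CdDelta X lam)) (orbit X z) \<longleftrightarrow>
            (\<exists>I. is_face_index X lam I \<and> z \<in> Cstar_compl I))
       \<and> (\<not> closedin (top_of_set (CdDelta X lam)) (orbit X z) \<longrightarrow>
            (\<exists>!Orb. (\<exists>w \<in> CdDelta X lam. Orb = orbit X w)
                  \<and> closedin (top_of_set (CdDelta X lam)) Orb
                  \<and> Orb \<subseteq> CdDelta X lam \<inter> closure (orbit X z)))"
proof -
  note zC = assms(2)
  define J where "J = {j. z $ j = 0}"
  have E: "(\<exists>I. is_face_index X lam I \<and> z \<in> Cstar_compl I) \<longleftrightarrow> is_face_index X lam J"
    unfolding Cstar_iff J_def by blast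
  have P1: "closedin (top_of_set (CdDelta X lam)) (orbit X z) \<longleftrightarrow> is_face_index X lam J"
    using CLOSED[of X lam z] CLOSED_IMP[OF zC] unfolding J_def by blast
  have P2: "\<exists>!Orb. (\<exists>w \<in> CdDelta X lam. Orb = orbit X w)
                  \<and> closedin (top_of_set (CdDelta X lam)) Orb
                  \<and> Orb \<subseteq> CdDelta X lam \<inter> closure (orbit X z)"
    if ncl: "\<not> closedin (top_of_set (CdDelta X lam)) (orbit X z)"
  proof -
    have "\<exists>\<mu>. \<mu> \<in> Delta X lam \<and> J \<subseteq> tight X lam \<mu> \<and>
       (\<forall>\<nu>. \<nu> \<in> Delta X lam \<and> J \<subseteq> tight X lam \<nu> \<longrightarrow> card (tight X lam \<mu>) \<le> card (tight X lam \<nu>))"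
      unfolding J_def by (rule exists_min[OF zC])
    then obtain \<mu> where mu0: "\<mu> \<in> Delta X lam \<and> J \<subseteq> tight X lam \<mu> \<and>
       (\<forall>\<nu>. \<nu> \<in> Delta X lam \<and> J \<subseteq> tight X lam \<nu> \<longrightarrow> card (tight X lam \<mu>) \<le> card (tight X lam \<nu>))"
      by blast
    then have mu: "\<mu> \<in> Delta X lam" "J \<subseteq> tight X lam \<mu>" by auto
    have minimal: "\<And>\<nu>. \<nu> \<in> Delta X lam \<Longrightarrow> J \<subseteq> tight X lam \<nu> \<Longrightarrow> card (tight X lam \<mu>) \<le> card (tight X lam \<nu>)"
      using mu0 by blast
    define I where "I = tight X lam \<mu>"
    have "\<exists>Y \<in> nfrak X. (\<forall>j. j \<notin> I \<longrightarrow> Y $ j = 0) \<and> (\<forall>j \<in> I - J. Y $ j > 0)"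
      using dirsum[OF mu minimal] unfolding I_def .
    then obtain Y where Y: "Y \<in> nfrak X" "\<forall>j. j \<notin> I \<longrightarrow> Y $ j = 0" "\<forall>j \<in> I - J. Y $ j > 0"
      by blast
    define w where "w = (\<chi> j. if j \<in> I then 0 else z $ j)"
    have wcl: "w \<in> closure (orbit X z)" unfolding w_def
      by (rule limit_point[OF Y(1) Y(2)]) (use Y(3) in \<open>simp add: J_def\<close>)
    have JI: "J \<subseteq> I" using mu by (simp add: I_def)
    have wz: "{j. w $ j = 0} = I"
    proof (rule set_eqI)
      fix j show "j \<in> {j. w $ j = 0} \<longleftrightarrow> j \<in> I"
        using JI by (auto simp: w_def J_def)
    qed
    have fI: "is_face_index X lam I" unfolding face_index_iff I_def using mu(1) by blast
    have wC: "w \<in> CdDelta X lam" unfolding CdDelta_iff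
    proof (intro bexI[OF _ mu(1)] allI impI)
      fix j assume "\<mu> \<bullet> X j \<noteq> lam j"
      then have "j \<notin> I" by (simp add: I_def tight_def)
      then show "w $ j \<noteq> 0" using wz by blast
    qed
    have cw: "closedin (top_of_set (CdDelta X lam)) (orbit X w)"
      by (rule CLOSED) (simp add: wz fI)
    have sub: "orbit X w \<subseteq> CdDelta X lam \<inter> closure (orbit X z)"
      using closedin_iff2[THEN iffD1, OF cw] orbit_closure_invariant[OF wcl] by blast
    have uniq: "Orb = orbit X w"
      if h: "(\<exists>w' \<in> CdDelta X lam. Orb = orbit X w')"
         "closedin (top_of_set (CdDelta X lam)) Orb"
         "Orb \<subseteq> CdDelta X lam \<inter> closure (orbit X z)" for Orb
    proof -
      obtain w' where w': "w' \<in> CdDelta X lam" "Orb = orbit X w'" using h(1) by blast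
      have fw': "is_face_index X lam {j. w' $ j = 0}"
        using CLOSED_IMP[OF w'(1)] h(2) w'(2) by blast
      obtain \<nu> where nu: "\<nu> \<in> Delta X lam" "tight X lam \<nu> = {j. w' $ j = 0}"
        using fw' unfolding face_index_iff by blast
      have w'cl: "w' \<in> closure (orbit X z)" using h(3) w'(2) orbit_refl[of w' X] by blast
      obtain Ys where Ys: "\<forall>k. Ys k \<in> nfrak X" "(\<lambda>k. act (Ys k) z) \<longlonglongrightarrow> w'"
        using seq_of_closure[OF w'cl] by blast
      have hz: "\<And>j. \<mu> \<bullet> X j \<noteq> lam j \<Longrightarrow> z $ j \<noteq> 0"
      proof -
        fix j assume "\<mu> \<bullet> X j \<noteq> lam j"
        then have "j \<notin> I" by (simp add: I_def tight_def)
        then have "j \<notin> J" using JI by blast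
        then show "z $ j \<noteq> 0" by (simp add: J_def)
      qed
      have hw: "\<And>j. \<nu> \<bullet> X j \<noteq> lam j \<Longrightarrow> w' $ j \<noteq> 0"
      proof -
        fix j assume "\<nu> \<bullet> X j \<noteq> lam j"
        then have "j \<notin> tight X lam \<nu>" by (simp add: tight_def)
        then show "w' $ j \<noteq> 0" using nu(2) by blast
      qed
      have s1: "{j. w' $ j = 0} \<subseteq> I"
      proof
        fix j assume j: "j \<in> {j. w' $ j = 0}"
        show "j \<in> I"
        proof (rule ccontr)
          assume "j \<notin> I"
          then have "\<mu> \<bullet> X j \<noteq> lam j" by (simp add: I_def tight_def)
          then have "w' $ j \<noteq> 0"
            using key[of Ys X z w' \<mu> lam \<nu> j] Ys mu(1) nu(1) hz hw by blast
          then show False using j by simp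
        qed
      qed
      have s2: "J \<subseteq> {j. w' $ j = 0}"
      proof
        fix j assume "j \<in> J"
        then have "z $ j = 0" by (simp add: J_def)
        then show "j \<in> {j. w' $ j = 0}" using seq_zero[OF Ys(2)] by simp
      qed
      have "card I \<le> card {j. w' $ j = 0}"
        using minimal[OF nu(1)] nu(2) s2 by (simp add: I_def)
      moreover have "card {j. w' $ j = 0} \<le> card I" using s1 by (intro card_mono) auto
      ultimately have "card {j. w' $ j = 0} = card I" by linarith
      then have zw': "{j. w' $ j = 0} = I"
        using s1 by (intro card_subset_eq) auto
      have lim2: "(\<lambda>k. act (Ys k) w) \<longlonglongrightarrow> w'"
      proof (rule vec_tendstoI)
        fix j
        show "(\<lambda>k. act (Ys k) w $ j) \<longlonglongrightarrow> w' $ j"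
        proof (cases "j \<in> I")
          case True
          then have "w $ j = 0" "w' $ j = 0" using wz zw' by blast+
          then show ?thesis by (simp add: act_nth)
        next
          case False
          then have "w $ j = z $ j" by (simp add: w_def)
          then have "\<And>k. act (Ys k) w $ j = act (Ys k) z $ j" by (simp add: act_nth)
          then show ?thesis using tendsto_vec_nth[OF Ys(2), of j] by simp
        qed
      qed
      have "w' \<in> orbit X w"
      proof (rule limit_in_orbit[of Ys X w w'])
        show "\<And>k. Ys k \<in> nfrak X" using Ys(1) by blast
        show "(\<lambda>k. act (Ys k) w) \<longlonglongrightarrow> w'" by (rule lim2)
        fix j assume "w $ j \<noteq> 0"
        then have "j \<notin> I" using wz by blast
        then show "w' $ j \<noteq> 0" using zw' by blast
      qed
      then show "Orb = orbit X w" using w'(2) orbit_trans by blast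
    qed
    show ?thesis
    proof (rule ex1I[of _ "orbit X w"])
      show "(\<exists>w' \<in> CdDelta X lam. orbit X w = orbit X w') \<and> closedin (top_of_set (CdDelta X lam)) (orbit X w)
            \<and> orbit X w \<subseteq> CdDelta X lam \<inter> closure (orbit X z)"
        using wC cw sub by blast
    next
      fix Orb assume "(\<exists>w' \<in> CdDelta X lam. Orb = orbit X w') \<and> closedin (top_of_set (CdDelta X lam)) Orb
            \<and> Orb \<subseteq> CdDelta X lam \<inter> closure (orbit X z)"
      then show "Orb = orbit X w" using uniq by blast
    qed
  qed
  show ?thesis using P1 E P2 by blast
qed

end
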